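(* Let $M$ be a von Neumann algebra, $\omega$ a faithful normal state on $M$, and $T:M\to M$ a positive linear map with $T(I)\le I$. Suppose there exists $\delta>0$ such that for all $k\ge0$, \[ \omega(T^k(d(T)))\in\{0\}\cup[\delta,\infty). \] Then the stabilization index satisfies $n_T\le\lfloor 1/\delta\rfloor$.
   Context: $d(T)=I-T(I)\ge0$ is the defect; $T^0=\mathrm{id}$. The stabilization index is $n_T=\min\{n\ge1:T^n(d(T))=0\}$. A state $\omega$ is faithful if $\omega(x)=0$ with $x\ge0$ implies $x=0$. *)

theory Defs
  imports "HOL-Analysis.Analysis" "HOL-Library.Function_Algebras"
begin

text \<open>Concrete model of a complex Hilbert space: every complex Hilbert space is
  unitarily isomorphic to l2(I) for some index set I; we take I = UNIV :: 'i set
  (an arbitrary type).\<close>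

type_synonym 'i vec = "'i \<Rightarrow> complex"
type_synonym 'i op = "'i vec \<Rightarrow> 'i vec"

definition l2 :: "'i vec set" where
  "l2 = {f. (\<lambda>i. (cmod (f i))\<^sup>2) summable_on UNIV}"

definition ip :: "'i vec \<Rightarrow> 'i vec \<Rightarrow> complex" where
  "ip f g = (\<Sum>\<^sub>\<infinity>i. cnj (f i) * g i)"

definition l2norm :: "'i vec \<Rightarrow> real" where
  "l2norm f = sqrt (\<Sum>\<^sub>\<infinity>i. (cmod (f i))\<^sup>2)"

definition vscale :: "complex \<Rightarrow> 'i vec \<Rightarrow> 'i vec" where
  "vscale c f = (\<lambda>i. c * f i)"

text \<open>Bounded operators on l2, with canonical representative (zero off l2).\<close>
definition bounded_op :: "'i op \<Rightarrow> bool" where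
  "bounded_op A \<longleftrightarrow>
     (\<forall>f\<in>l2. A f \<in> l2) \<and> (\<forall>f. f \<notin> l2 \<longrightarrow> A f = 0) \<and>
     (\<forall>f\<in>l2. \<forall>g\<in>l2. A (f + g) = A f + A g) \<and>
     (\<forall>f\<in>l2. \<forall>c. A (vscale c f) = vscale c (A f)) \<and>
     (\<exists>C. \<forall>f\<in>l2. l2norm (A f) \<le> C * l2norm f)"

definition id_op :: "'i op" where
  "id_op f = (if f \<in> l2 then f else 0)"

definition op_scale :: "complex \<Rightarrow> 'i op \<Rightarrow> 'i op" where
  "op_scale c A = (\<lambda>f. vscale c (A f))"

definition is_adjoint :: "'i op \<Rightarrow> 'i op \<Rightarrow> bool" where
  "is_adjoint A B \<longleftrightarrow> bounded_op B \<and> (\<forall>f\<in>l2. \<forall>g\<in>l2. ip (A f) g = ip f (B g))"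

definition self_adjoint :: "'i op \<Rightarrow> bool" where
  "self_adjoint A \<longleftrightarrow> bounded_op A \<and> is_adjoint A A"

text \<open>Positive operator: <f, A f> >= 0 for all f (on a complex Hilbert space this
  forces self-adjointness).\<close>
definition pos_op :: "'i op \<Rightarrow> bool" where
  "pos_op A \<longleftrightarrow> bounded_op A \<and> (\<forall>f\<in>l2. ip f (A f) \<in> \<real> \<and> 0 \<le> Re (ip f (A f)))"

definition op_le :: "'i op \<Rightarrow> 'i op \<Rightarrow> bool" where
  "op_le A B \<longleftrightarrow> self_adjoint A \<and> self_adjoint B \<and> pos_op (B - A)"

definition commutant :: "'i op set \<Rightarrow> 'i op set" where
  "commutant S = {B. bounded_op B \<and> (\<forall>A\<in>S. A \<circ> B = B \<circ> A)}"

definition von_neumann_algebra :: "'i op set \<Rightarrow> bool" where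
  "von_neumann_algebra M \<longleftrightarrow>
     M \<subseteq> Collect bounded_op \<and> (\<forall>A\<in>M. \<exists>B\<in>M. is_adjoint A B) \<and>
     commutant (commutant M) = M"

definition state_on :: "'i op set \<Rightarrow> ('i op \<Rightarrow> complex) \<Rightarrow> bool" where
  "state_on M \<omega> \<longleftrightarrow>
     (\<forall>x\<in>M. \<forall>y\<in>M. \<omega> (x + y) = \<omega> x + \<omega> y) \<and>
     (\<forall>x\<in>M. \<forall>c. \<omega> (op_scale c x) = c * \<omega> x) \<and>
     (\<forall>x\<in>M. pos_op x \<longrightarrow> \<omega> x \<in> \<real> \<and> 0 \<le> Re (\<omega> x)) \<and>
     \<omega> id_op = 1"

definition faithful_on :: "'i op set \<Rightarrow> ('i op \<Rightarrow> complex) \<Rightarrow> bool" where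
  "faithful_on M \<omega> \<longleftrightarrow> (\<forall>x\<in>M. pos_op x \<longrightarrow> \<omega> x = 0 \<longrightarrow> x = 0)"

text \<open>Normality: for every bounded increasing net (upward directed nonempty family)
  of self-adjoint elements of M with supremum x (least upper bound among the
  self-adjoint bounded operators), omega(x) = sup omega(x_alpha).\<close>
definition normal_on :: "'i op set \<Rightarrow> ('i op \<Rightarrow> complex) \<Rightarrow> bool" where
  "normal_on M \<omega> \<longleftrightarrow>
     (\<forall>D x. D \<subseteq> M \<and> D \<noteq> {} \<and> (\<forall>a\<in>D. self_adjoint a) \<and>
        (\<forall>a\<in>D. \<forall>b\<in>D. \<exists>c\<in>D. op_le a c \<and> op_le b c) \<and>
        x \<in> M \<and> (\<forall>a\<in>D. op_le a x) \<and>
        (\<forall>y. self_adjoint y \<and> (\<forall>a\<in>D. op_le a y) \<longrightarrow> op_le x y)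
      \<longrightarrow> Re (\<omega> x) = (SUP a\<in>D. Re (\<omega> a)))"

definition positive_linear_map :: "'i op set \<Rightarrow> ('i op \<Rightarrow> 'i op) \<Rightarrow> bool" where
  "positive_linear_map M T \<longleftrightarrow>
     (\<forall>x\<in>M. T x \<in> M) \<and>
     (\<forall>x\<in>M. \<forall>y\<in>M. T (x + y) = T x + T y) \<and>
     (\<forall>x\<in>M. \<forall>c. T (op_scale c x) = op_scale c (T x)) \<and>
     (\<forall>x\<in>M. pos_op x \<longrightarrow> pos_op (T x))"

definition defect :: "('i op \<Rightarrow> 'i op) \<Rightarrow> 'i op" where
  "defect T = id_op - T id_op"

definition stab_index :: "('i op \<Rightarrow> 'i op) \<Rightarrow> nat" where
  "stab_index T = (LEAST n. 1 \<le> n \<and> (T ^^ n) (defect T) = 0)"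

end

theory Submission
  imports Defs
begin

lemma bop_zero: "bounded_op A \<Longrightarrow> A 0 = 0"
proof -
  assume b: "bounded_op A"
  show "A 0 = 0"
  proof (cases "(0::'a vec) \<in> l2")
    case True
    then have "A (0 + 0) = A 0 + A 0" using b unfolding bounded_op_def by blast
    then show ?thesis by simp
  next
    case False
    then show ?thesis using b unfolding bounded_op_def by blast
  qed
qed

lemma commutantI: "bounded_op B \<Longrightarrow> (\<And>A. A \<in> S \<Longrightarrow> A \<circ> B = B \<circ> A) \<Longrightarrow> B \<in> commutant S"
  unfolding commutant_def by blast

lemma l2_neg: "v \<in> l2 \<Longrightarrow> vscale (-1) v \<in> l2"
  unfolding l2_def vscale_def by simp

lemma bop_diff:
  assumes b: "bounded_op A" and u: "u \<in> l2" and v: "v \<in> l2"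
  shows "A (u - v) = A u - A v"
proof -
  have e: "u - v = u + vscale (-1) v" unfolding vscale_def by (rule ext) simp
  have "A (u + vscale (-1) v) = A u + A (vscale (-1) v)"
    using b u l2_neg[OF v] unfolding bounded_op_def by blast
  also have "A (vscale (-1) v) = vscale (-1) (A v)" using b v unfolding bounded_op_def by blast
  also have "vscale (-1) (A v) = - A v" unfolding vscale_def by (rule ext) simp
  finally have "A (u + vscale (-1) v) = A u - A v" by (metis diff_conv_add_uminus)
  then show ?thesis unfolding e .
qed

lemma pos_id:
  assumes "bounded_op (id_op :: 'i op)"
  shows "pos_op (id_op :: 'i op)"
  unfolding pos_op_def
proof (rule conjI[OF assms], intro ballI)
  fix f :: "'i vec" assume f: "f \<in> l2"
  have s: "((\<lambda>i. (cmod (f i))\<^sup>2) has_sum (\<Sum>\<^sub>\<infinity>i. (cmod (f i))\<^sup>2)) UNIV"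
    using f unfolding l2_def by (simp add: has_sum_infsum)
  have "((\<lambda>i. complex_of_real ((cmod (f i))\<^sup>2)) has_sum complex_of_real (\<Sum>\<^sub>\<infinity>i. (cmod (f i))\<^sup>2)) UNIV"
    using has_sum_of_real[OF s] .
  moreover have "(\<lambda>i. complex_of_real ((cmod (f i))\<^sup>2)) = (\<lambda>i. cnj (f i) * f i)"
    by (rule ext) (metis complex_norm_square mult.commute)
  ultimately have "ip f (id_op f) = complex_of_real (\<Sum>\<^sub>\<infinity>i. (cmod (f i))\<^sup>2)"
    unfolding ip_def id_op_def using f by (simp add: infsumI)
  moreover have "(\<Sum>\<^sub>\<infinity>i. (cmod (f i))\<^sup>2) \<ge> 0" by (simp add: infsum_nonneg)
  ultimately show "ip f (id_op f) \<in> \<real> \<and> 0 \<le> Re (ip f (id_op f))" by simp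
qed

theorem proposition7p23:
  fixes M :: "'i op set" and \<omega> :: "'i op \<Rightarrow> complex"
    and T :: "'i op \<Rightarrow> 'i op" and \<delta> :: real
  assumes "von_neumann_algebra M"
    and "state_on M \<omega>" and "normal_on M \<omega>" and "faithful_on M \<omega>"
    and "positive_linear_map M T"
    and "op_le (T id_op) id_op"
    and "T id_op \<noteq> id_op"
    and "\<delta> > 0"
    and "\<forall>k. \<omega> ((T ^^ k) (defect T)) = 0 \<or>
             (\<omega> ((T ^^ k) (defect T)) \<in> \<real> \<and> \<delta> \<le> Re (\<omega> ((T ^^ k) (defect T))))"
  shows "(\<exists>n\<ge>1. (T ^^ n) (defect T) = 0) \<and> stab_index T \<le> nat \<lfloor>1 / \<delta>\<rfloor>"
proof -
  note vn = assms(1) and st = assms(2) and fa = assms(4) and pl = assms(5) and le = assms(6)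
  define d where "d = defect T"
  have Msub: "M \<subseteq> Collect bounded_op" and Mcc: "commutant (commutant M) = M"
    using vn unfolding von_neumann_algebra_def by auto
  have bid: "bounded_op (id_op :: 'i op)"
    using le unfolding op_le_def self_adjoint_def by blast
  have pd: "pos_op d" using le unfolding op_le_def d_def defect_def by blast
  have bd: "bounded_op d" using pd unfolding pos_op_def by blast
  have idM: "id_op \<in> M"
  proof -
    have "id_op \<in> commutant (commutant M)"
    proof (rule commutantI[OF bid])
      fix A assume "A \<in> commutant M"
      then have bA: "bounded_op A" unfolding commutant_def by blast
      show "A \<circ> id_op = id_op \<circ> A"
      proof (rule ext)
        fix f :: "'i vec"
        show "(A \<circ> id_op) f = (id_op \<circ> A) f"
        proof (cases "f \<in> l2")
          case True
          then have "A f \<in> l2" using bA unfolding bounded_op_def by blast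
          then show ?thesis using True by (simp add: id_op_def)
        next
          case False
          then have "A f = 0" using bA unfolding bounded_op_def by blast
          then show ?thesis using False bop_zero[OF bA] by (simp add: id_op_def)
        qed
      qed
    qed
    then show ?thesis using Mcc by simp
  qed
  have TM: "\<And>x. x \<in> M \<Longrightarrow> T x \<in> M" using pl unfolding positive_linear_map_def by blast
  have Tadd: "\<And>x y. x \<in> M \<Longrightarrow> y \<in> M \<Longrightarrow> T (x + y) = T x + T y"
    using pl unfolding positive_linear_map_def by blast
  have Tpos: "\<And>x. x \<in> M \<Longrightarrow> pos_op x \<Longrightarrow> pos_op (T x)"
    using pl unfolding positive_linear_map_def by blast
  have TidM: "T id_op \<in> M" using TM idM .
  have bTid: "bounded_op (T id_op)" using TidM Msub by blast
  have dM: "d \<in> M"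
  proof -
    have "d \<in> commutant (commutant M)"
    proof (rule commutantI[OF bd])
      fix A assume AM: "A \<in> commutant M"
      then have bA: "bounded_op A" unfolding commutant_def by blast
      have "\<forall>X\<in>M. X \<circ> A = A \<circ> X" using AM unfolding commutant_def by simp
      then have comm: "A \<circ> T id_op = T id_op \<circ> A" using TidM by (metis (no_types))
      show "A \<circ> d = d \<circ> A"
      proof (rule ext)
        fix f :: "'i vec"
        show "(A \<circ> d) f = (d \<circ> A) f"
        proof (cases "f \<in> l2")
          case True
          then have Af: "A f \<in> l2" using bA unfolding bounded_op_def by blast
          have Tf: "T id_op f \<in> l2" using True bTid unfolding bounded_op_def by blast
          have deq: "\<And>g. g \<in> l2 \<Longrightarrow> d g = g - T id_op g"
            unfolding d_def defect_def fun_diff_def id_op_def by simp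
          have "A (d f) = A (f - T id_op f)" by (simp only: deq[OF True])
          also have "\<dots> = A f - A (T id_op f)" using bop_diff[OF bA True Tf] .
          also have "A (T id_op f) = T id_op (A f)" using comm by (metis comp_apply)
          finally have c: "A (d f) = A f - T id_op (A f)" .
          show ?thesis by (simp only: comp_apply c deq[OF Af])
        next
          case False
          then have "A f = 0" using bA unfolding bounded_op_def by blast
          moreover have "d f = 0" using bd False unfolding bounded_op_def by blast
          ultimately show ?thesis using bop_zero[OF bA] bop_zero[OF bd] by simp
        qed
      qed
    qed
    then show ?thesis using Mcc by simp
  qed
  have TkM: "\<And>k x. x \<in> M \<Longrightarrow> (T ^^ k) x \<in> M"
  proof -
    fix k x assume "x \<in> M" then show "(T ^^ k) x \<in> M" by (induction k) (auto intro: TM)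
  qed
  have Tkpos: "\<And>k x. x \<in> M \<Longrightarrow> pos_op x \<Longrightarrow> pos_op ((T ^^ k) x)"
  proof -
    fix k x assume "x \<in> M" "pos_op x"
    then show "pos_op ((T ^^ k) x)" by (induction k) (auto intro: Tpos TkM)
  qed
  have Tkadd: "\<And>k x y. x \<in> M \<Longrightarrow> y \<in> M \<Longrightarrow> (T ^^ k) (x + y) = (T ^^ k) x + (T ^^ k) y"
  proof -
    fix k x y assume "x \<in> M" "y \<in> M"
    then show "(T ^^ k) (x + y) = (T ^^ k) x + (T ^^ k) y"
      by (induction k) (auto simp: Tadd TkM)
  qed
  have wadd: "\<And>x y. x \<in> M \<Longrightarrow> y \<in> M \<Longrightarrow> \<omega> (x + y) = \<omega> x + \<omega> y"
    using st unfolding state_on_def by blast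
  have wpos: "\<And>x. x \<in> M \<Longrightarrow> pos_op x \<Longrightarrow> \<omega> x \<in> \<real> \<and> 0 \<le> Re (\<omega> x)"
    using st unfolding state_on_def by blast
  have w1: "\<omega> id_op = 1" using st unfolding state_on_def by blast
  have idd: "d + T id_op = id_op" by (simp add: d_def defect_def)
  have step: "\<And>k. \<omega> ((T ^^ k) id_op) = \<omega> ((T ^^ k) d) + \<omega> ((T ^^ Suc k) id_op)"
  proof -
    fix k
    have "(T ^^ k) id_op = (T ^^ k) d + (T ^^ k) (T id_op)"
      using Tkadd[OF dM TidM, of k] idd by simp
    also have "(T ^^ k) (T id_op) = (T ^^ Suc k) id_op" by (simp add: funpow_swap1)
    finally have e: "(T ^^ k) id_op = (T ^^ k) d + (T ^^ Suc k) id_op" .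
    have m1: "(T ^^ k) d \<in> M" using TkM dM .
    have m2: "(T ^^ Suc k) id_op \<in> M" using TkM idM .
    show "\<omega> ((T ^^ k) id_op) = \<omega> ((T ^^ k) d) + \<omega> ((T ^^ Suc k) id_op)"
      by (subst e) (rule wadd[OF m1 m2])
  qed
  have tele: "\<And>n. (\<Sum>k<n. Re (\<omega> ((T ^^ k) d))) + Re (\<omega> ((T ^^ n) id_op)) = 1"
  proof -
    fix n show "(\<Sum>k<n. Re (\<omega> ((T ^^ k) d))) + Re (\<omega> ((T ^^ n) id_op)) = 1"
    proof (induction n)
      case 0 then show ?case using w1 by simp
    next
      case (Suc n)
      then show ?case using step[of n] by simp
    qed
  qed
  have pid: "pos_op (id_op :: 'i op)" using pos_id[OF bid] .
  have bound: "\<And>n. (\<forall>k<n. (T ^^ k) d \<noteq> 0) \<Longrightarrow> real n * \<delta> \<le> 1"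
  proof -
    fix n assume nz: "\<forall>k<n. (T ^^ k) d \<noteq> 0"
    have ge: "\<And>k. k < n \<Longrightarrow> \<delta> \<le> Re (\<omega> ((T ^^ k) d))"
    proof -
      fix k assume "k < n"
      then have "(T ^^ k) d \<noteq> 0" using nz by blast
      then have "\<omega> ((T ^^ k) d) \<noteq> 0"
        using fa TkM[OF dM] Tkpos[OF dM pd] unfolding faithful_on_def by blast
      then show "\<delta> \<le> Re (\<omega> ((T ^^ k) d))" using assms(9) unfolding d_def by blast
    qed
    have "(\<Sum>k<n. \<delta>) \<le> (\<Sum>k<n. Re (\<omega> ((T ^^ k) d)))"
      by (rule sum_mono) (simp add: ge)
    moreover have "0 \<le> Re (\<omega> ((T ^^ n) id_op))"
      using wpos TkM[OF idM] Tkpos[OF idM pid] by blast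
    ultimately show "real n * \<delta> \<le> 1" using tele[of n] by simp
  qed
  define N where "N = nat \<lfloor>1 / \<delta>\<rfloor>"
  have "\<not> (\<forall>k<Suc N. (T ^^ k) d \<noteq> 0)"
  proof
    assume "\<forall>k<Suc N. (T ^^ k) d \<noteq> 0"
    then have "real (Suc N) * \<delta> \<le> 1" by (rule bound)
    then have "real (Suc N) \<le> 1 / \<delta>" using assms(8) by (simp add: field_simps)
    moreover have "1 / \<delta> < real N + 1"
    proof -
      have p: "0 \<le> \<lfloor>1 / \<delta>\<rfloor>" using assms(8) by simp
      have "1 / \<delta> < real_of_int \<lfloor>1 / \<delta>\<rfloor> + 1" by (rule real_of_int_floor_add_one_gt)
      moreover have "real N = real_of_int \<lfloor>1 / \<delta>\<rfloor>" unfolding N_def using p by simp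
      ultimately show ?thesis by simp
    qed
    ultimately show False by simp
  qed
  then obtain k where k: "k \<le> N" "(T ^^ k) d = 0" by (auto simp: less_Suc_eq_le)
  have "d \<noteq> 0" using assms(7) idd by auto
  then have k1: "k \<ge> 1" using k by (cases k) auto
  have "stab_index T \<le> k" unfolding stab_index_def using k k1 d_def by (auto intro: Least_le)
  then show ?thesis using k k1 N_def d_def by auto
qed

end
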